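(* For any even number $p$, the worst-case egalitarian rank of any balanced categorial sequential allocation mechanism with all agents pessimistic is $n^p-(n-1)p/2$. Moreover, balanced CSAMs have the smallest worst-case egalitarian rank among all CSAMs with all agents pessimistic.
   Context: Basic categorized domain: $n$ agents, $p$ categories $D_i=\{1,\ldots,n\}$ of indivisible items, bundles $\mathfrak D=D_1\times\cdots\times D_p$; each agent $j$ has a linear order $R_j$ over $\mathfrak D$; a profile is $P_n=(R_1,\ldots,R_n)$. $\mathrm{Rank}(R,\vec d)$ is the position of $\vec d$ in $R$ (top $=1$, bottom $=n^p$). CSAM $f_\mathcal O$: given a linear order $\mathcal O$ over $\{1,\ldots,n\}\times\{1,\ldots,p\}$, in rounds $t=1,\ldots,np$, if the $t$-th element of $\mathcal O$ is $(j,i)$ then agent $j$ chooses an item $d_{j,i}$ from $D_{i,t}$, the items of $D_i$ not yet chosen at the start of round $t$. Agent $j$ receives $f^j_\mathcal O(P_n)=(d_{j,1},\ldots,d_{j,p})$. A pessimistic agent $j$ choosing from $D_i$ in round $t$: a bundle is available to her if for each category $l$ from which she has already chosen its $l$-th component equals $d_{j,l}$ and for each other category $l$ its $l$-th component lies in $D_{l,t}$; she chooses the $d\in D_{i,t}$ for which her lowest-ranked available bundle with $i$-th component $d$ is highest in $R_j$. Balanced CSAM (for even $p$): given a linear order $\mathcal K=j_1\rhd\cdots\rhd j_n$ over agents, items are chosen in $p$ phases; in phase $i$ all agents choose from $D_i$, in the order $\mathcal K$ if $i$ is odd and in the reverse of $\mathcal K$ if $i$ is even. Worst-case egalitarian rank: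 $\max_{P_n}\max_{j}\mathrm{Rank}(R_j,f^j_\mathcal O(P_n))$ over all profiles of $n$ agents. *)

theory Defs
  imports Main
begin

text \<open>Conventions: agents are 0..<n, categories are 0..<p, and the items of
each category D_i are 0..<n (a shift of 1..n). A bundle is a list of length p
whose i-th entry is the item from category i. A linear order R over bundles is
represented by its rank function: a bijection from the bundles onto 1..n^p
(rank 1 = top).\<close>

definition bundles :: "nat \<Rightarrow> nat \<Rightarrow> nat list set" where
  "bundles n p = {d. length d = p \<and> (\<forall>i<p. d ! i < n)}"

definition valid_pref :: "nat \<Rightarrow> nat \<Rightarrow> (nat list \<Rightarrow> nat) \<Rightarrow> bool" where
  "valid_pref n p R \<longleftrightarrow> bij_betw R (bundles n p) {1..n ^ p}"

definition valid_profile :: "nat \<Rightarrow> nat \<Rightarrow> (nat \<Rightarrow> nat list \<Rightarrow> nat) \<Rightarrow> bool" where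
  "valid_profile n p P \<longleftrightarrow> (\<forall>j<n. valid_pref n p (P j))"

text \<open>A CSAM is given by a linear order over agents x categories, as a list.\<close>
definition valid_order :: "nat \<Rightarrow> nat \<Rightarrow> (nat \<times> nat) list \<Rightarrow> bool" where
  "valid_order n p Ord \<longleftrightarrow> distinct Ord \<and> set Ord = {..<n} \<times> {..<p}"

text \<open>Allocation state: A j l = Some x iff agent j has already chosen item x
from category l.\<close>
type_synonym state = "nat \<Rightarrow> nat \<Rightarrow> nat option"

definition remaining :: "nat \<Rightarrow> state \<Rightarrow> nat \<Rightarrow> nat set" where
  "remaining n A l = {x. x < n \<and> (\<forall>j. A j l \<noteq> Some x)}"

definition avail_bundles :: "nat \<Rightarrow> nat \<Rightarrow> state \<Rightarrow> nat \<Rightarrow> nat list set" where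
  "avail_bundles n p A j = {d. length d = p \<and> (\<forall>l<p.
      (case A j l of Some x \<Rightarrow> d ! l = x | None \<Rightarrow> d ! l \<in> remaining n A l))}"

definition pess_choice :: "nat \<Rightarrow> nat \<Rightarrow> (nat list \<Rightarrow> nat) \<Rightarrow> state \<Rightarrow> nat \<Rightarrow> nat \<Rightarrow> nat" where
  "pess_choice n p R A j i =
     arg_min_on (\<lambda>x. Max (R ` {d \<in> avail_bundles n p A j. d ! i = x})) (remaining n A i)"

fun csam_step :: "nat \<Rightarrow> nat \<Rightarrow> (nat \<Rightarrow> nat list \<Rightarrow> nat) \<Rightarrow> nat \<times> nat \<Rightarrow> state \<Rightarrow> state" where
  "csam_step n p P (j, i) A = A(j := (A j)(i := Some (pess_choice n p (P j) A j i)))"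

definition csam_run :: "nat \<Rightarrow> nat \<Rightarrow> (nat \<Rightarrow> nat list \<Rightarrow> nat) \<Rightarrow> (nat \<times> nat) list \<Rightarrow> state" where
  "csam_run n p P Ord = fold (csam_step n p P) Ord (\<lambda>_ _. None)"

definition csam_outcome :: "nat \<Rightarrow> nat \<Rightarrow> (nat \<times> nat) list \<Rightarrow> (nat \<Rightarrow> nat list \<Rightarrow> nat) \<Rightarrow> nat \<Rightarrow> nat list" where
  "csam_outcome n p Ord P j = map (\<lambda>i. the (csam_run n p P Ord j i)) [0..<p]"

definition worst_egal_rank :: "nat \<Rightarrow> nat \<Rightarrow> (nat \<times> nat) list \<Rightarrow> nat" where
  "worst_egal_rank n p Ord =
     Max {P j (csam_outcome n p Ord P j) | P j. valid_profile n p P \<and> j < n}"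

definition valid_agent_order :: "nat \<Rightarrow> nat list \<Rightarrow> bool" where
  "valid_agent_order n K \<longleftrightarrow> distinct K \<and> set K = {..<n}"

text \<open>Balanced CSAM: phase i (0-based) uses K if i is even (i.e. odd 1-based
phase), rev K otherwise.\<close>
definition balanced_order :: "nat \<Rightarrow> nat list \<Rightarrow> (nat \<times> nat) list" where
  "balanced_order p K =
     concat (map (\<lambda>i. map (\<lambda>j. (j, i)) (if even i then K else rev K)) [0..<p])"

end

theory Submission
  imports Defs
begin


definition cnt :: "nat \<Rightarrow> (nat \<times> nat) list \<Rightarrow> nat" where
  "cnt i xs = length (filter (\<lambda>a. snd a = i) xs)"

lemma cnt_append[simp]: "cnt i (xs @ ys) = cnt i xs + cnt i ys"
  by (simp add: cnt_def)

lemma cnt_single[simp]: "cnt i [a] = (if snd a = i then 1 else 0)"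
  by (simp add: cnt_def)

lemma cnt_card: assumes "distinct xs" shows "cnt i xs = card {j. (j,i) \<in> set xs}"
proof -
  have "cnt i xs = card (set (filter (\<lambda>a. snd a = i) xs))"
    unfolding cnt_def using assms by (metis distinct_card distinct_filter)
  also have "set (filter (\<lambda>a. snd a = i) xs) = (\<lambda>j. (j,i)) ` {j. (j,i) \<in> set xs}"
    by force
  also have "card \<dots> = card {j. (j,i) \<in> set xs}"
    by (rule card_image) (auto simp: inj_on_def)
  finally show ?thesis .
qed

lemma cnt_less:
  assumes "distinct xs" "\<forall>a\<in>set xs. fst a < n" "(j,i) \<notin> set xs" "j < n"
  shows "cnt i xs < n"
proof -
  have "{j'. (j',i) \<in> set xs} \<subseteq> {..<n} - {j}" using assms by force
  then have "card {j'. (j',i) \<in> set xs} \<le> card ({..<n} - {j})" by (intro card_mono) auto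
  also have "\<dots> = n - 1" using assms by simp
  finally have "card {j'. (j',i) \<in> set xs} \<le> n - 1" .
  moreover have "cnt i xs = card {j'. (j',i) \<in> set xs}" by (rule cnt_card[OF assms(1)])
  ultimately show ?thesis using assms(4) by simp
qed

lemma remaining_finite[simp]: "finite (remaining n A l)"
  by (rule finite_subset[of _ "{..<n}"]) (auto simp: remaining_def)

lemma remaining_sub: "remaining n A l \<subseteq> {..<n}"
  by (auto simp: remaining_def)

lemma upd_other: "l \<noteq> i \<Longrightarrow> (A(j := (A j)(i := v))) j' l = A j' l"
  by (cases "j' = j") simp_all
lemma upd_same: "(A(j := (A j)(i := v))) j' i = (if j' = j then v else A j' i)"
  by simp
lemma remaining_step_same:
  "l \<noteq> i \<Longrightarrow> remaining n (A(j := (A j)(i := Some x))) l = remaining n A l"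
  unfolding remaining_def by (simp del: fun_upd_apply add: upd_other)
lemma remaining_step:
  assumes "A j i = None" shows "remaining n (A(j := (A j)(i := Some x))) i = remaining n A i - {x}"
proof -
  have "\<And>y. (\<forall>j'. (A(j := (A j)(i := Some x))) j' i \<noteq> Some y) \<longleftrightarrow> (\<forall>j'. A j' i \<noteq> Some y) \<and> y \<noteq> x"
    unfolding upd_same
  proof (intro iffI conjI allI)
    fix y j' assume h: "\<forall>j'. (if j' = j then Some x else A j' i) \<noteq> Some y"
    show "A j' i \<noteq> Some y"
    proof (cases "j' = j")
      case True then show ?thesis using assms by simp
    next
      case False then show ?thesis using h[rule_format, of j'] by simp
    qed
  next
    fix y assume h: "\<forall>j'. (if j' = j then Some x else A j' i) \<noteq> Some y"
    show "y \<noteq> x" using h[rule_format, of j] by auto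
  next
    fix y j' assume h: "(\<forall>j'. A j' i \<noteq> Some y) \<and> y \<noteq> x"
    show "(if j' = j then Some x else A j' i) \<noteq> Some y" using h by simp
  qed
  then show ?thesis unfolding remaining_def by blast
qed

lemma fold_take_Suc:
  "k < length xs \<Longrightarrow> fold f (take (Suc k) xs) s = f (xs ! k) (fold f (take k xs) s)"
  by (simp add: take_Suc_conv_app_nth)

lemma pess_in: "remaining n A i \<noteq> {} \<Longrightarrow> pess_choice n p R A j i \<in> remaining n A i"
  unfolding pess_choice_def by (rule arg_min_if_finite(1)) simp_all

locale octx =
  fixes n p :: nat and Ord :: "(nat \<times> nat) list"
  assumes vo: "valid_order n p Ord" and n1: "n \<ge> 1"
begin

lemma dist: "distinct Ord" using vo by (simp add: valid_order_def)
lemma setO: "set Ord = {..<n} \<times> {..<p}" using vo by (simp add: valid_order_def)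
lemma lenO: "length Ord = n * p"
  using distinct_card[OF dist] setO by (simp add: card_cartesian_product)

lemma nth_in: "k < length Ord \<Longrightarrow> fst (Ord ! k) < n \<and> snd (Ord ! k) < p"
  using setO nth_mem by fastforce

definition run :: "(nat \<Rightarrow> nat list \<Rightarrow> nat) \<Rightarrow> nat \<Rightarrow> state" where
  "run P k = fold (csam_step n p P) (take k Ord) (\<lambda>_ _. None)"

lemma run_Suc: "k < length Ord \<Longrightarrow> Ord ! k = (j,i) \<Longrightarrow>
   run P (Suc k) = (run P k)(j := (run P k j)(i := Some (pess_choice n p (P j) (run P k) j i)))"
  unfolding run_def by (simp add: fold_take_Suc)

lemma not_in_take: "k < length Ord \<Longrightarrow> Ord ! k \<notin> set (take k Ord)"
  using dist by (simp add: nth_eq_iff_index_eq in_set_conv_nth)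


lemma take_Suc_set: "k < length Ord \<Longrightarrow> set (take (Suc k) Ord) = insert (Ord ! k) (set (take k Ord))"
  by (simp add: take_Suc_conv_app_nth)

lemma take_fst: "\<forall>a\<in>set (take k Ord). fst a < n"
  using setO set_take_subset by fastforce

lemma cnt_take_less: "k < length Ord \<Longrightarrow> Ord ! k = (j,i) \<Longrightarrow> cnt i (take k Ord) < n"
  using cnt_less[OF distinct_take[OF dist] take_fst, of j i] not_in_take nth_in by fastforce


lemma run_inv: "k \<le> length Ord \<Longrightarrow>
 (\<forall>j l. run P k j l = None \<longleftrightarrow> (j,l) \<notin> set (take k Ord)) \<and>
 (\<forall>j l x. run P k j l = Some x \<longrightarrow> x < n) \<and>
 (\<forall>l. card (remaining n (run P k) l) + cnt l (take k Ord) = n)"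
proof (induction k)
  case 0
  then show ?case by (simp add: run_def remaining_def cnt_def)
next
  case (Suc k)
  then have k: "k < length Ord" by simp
  obtain j i where ji: "Ord ! k = (j,i)" by (cases "Ord ! k")
  define A where "A = run P k"
  define x where "x = pess_choice n p (P j) A j i"
  have IH1: "\<forall>j l. A j l = None \<longleftrightarrow> (j,l) \<notin> set (take k Ord)"
   and IH2: "\<forall>j l x. A j l = Some x \<longrightarrow> x < n"
   and IH3: "\<forall>l. card (remaining n A l) + cnt l (take k Ord) = n"
    using Suc k unfolding A_def by auto
  have Anone: "A j i = None" using IH1 not_in_take[OF k] ji by simp
  have "cnt i (take k Ord) < n" using cnt_take_less[OF k ji] .
  then have "card (remaining n A i) > 0" using IH3 by (metis add.commute less_add_same_cancel1 gr0I)
  then have ne: "remaining n A i \<noteq> {}" by auto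
  have xin: "x \<in> remaining n A i" unfolding x_def by (rule pess_in[OF ne])
  have runS: "run P (Suc k) = A(j := (A j)(i := Some x))"
    unfolding A_def x_def by (rule run_Suc[OF k ji])
  have setS: "set (take (Suc k) Ord) = insert (j,i) (set (take k Ord))"
    using take_Suc_set[OF k] ji by simp
  have cntS: "cnt l (take (Suc k) Ord) = cnt l (take k Ord) + (if l = i then 1 else 0)" for l
    using k ji by (simp add: take_Suc_conv_app_nth)
  have P1: "\<forall>j' l. run P (Suc k) j' l = None \<longleftrightarrow> (j',l) \<notin> set (take (Suc k) Ord)"
  proof (intro allI)
    fix j' l
    show "run P (Suc k) j' l = None \<longleftrightarrow> (j',l) \<notin> set (take (Suc k) Ord)"
      unfolding runS setS using IH1 by (cases "j' = j"; cases "l = i") simp_all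
  qed
  have P2: "\<forall>j' l y. run P (Suc k) j' l = Some y \<longrightarrow> y < n"
  proof (intro allI impI)
    fix j' l y assume "run P (Suc k) j' l = Some y"
    then show "y < n" unfolding runS using IH2 xin remaining_sub[of n A i]
      by (cases "j' = j"; cases "l = i") auto
  qed
  have P3: "\<forall>l. card (remaining n (run P (Suc k)) l) + cnt l (take (Suc k) Ord) = n"
  proof
    fix l
    show "card (remaining n (run P (Suc k)) l) + cnt l (take (Suc k) Ord) = n"
    proof (cases "l = i")
      case True
      have "card (remaining n (run P (Suc k)) l) = card (remaining n A i) - 1"
        unfolding runS True remaining_step[of A j i, OF Anone] using xin by simp
      moreover have "card (remaining n A i) + cnt i (take k Ord) = n" using IH3 by blast
      ultimately show ?thesis using True cntS[of i] \<open>card (remaining n A i) > 0\<close> by simp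
    next
      case False
      then show ?thesis unfolding runS remaining_step_same[OF False] using IH3 cntS by simp
    qed
  qed
  show ?case using P1 P2 P3 by blast
qed

end


lemma bundles_finite: "finite (bundles n p)"
proof -
  have "bundles n p = {xs. set xs \<subseteq> {..<n} \<and> length xs = p}"
    unfolding bundles_def by (auto simp: in_set_conv_nth) (meson lessThan_iff nth_mem subsetD)
  then show ?thesis by (simp add: finite_lists_length_eq)
qed

lemma bundles_card: "card (bundles n p) = n ^ p"
proof -
  have "bundles n p = {xs. set xs \<subseteq> {..<n} \<and> length xs = p}"
    unfolding bundles_def by (auto simp: in_set_conv_nth) (meson lessThan_iff nth_mem subsetD)
  then show ?thesis by (simp add: card_lists_length_eq)
qed

lemma avail_pick:
  assumes "A j i = None" "x \<in> remaining n A i" "i < p"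
  shows "avail_bundles n p (A(j := (A j)(i := Some x))) j = {d \<in> avail_bundles n p A j. d ! i = x}"
proof -
  have r: "\<And>l. l \<noteq> i \<Longrightarrow> remaining n (A(j := (A j)(i := Some x))) l = remaining n A l"
    by (rule remaining_step_same)
  show ?thesis
  proof (intro set_eqI iffI)
    fix d assume d: "d \<in> avail_bundles n p (A(j := (A j)(i := Some x))) j"
    have "d ! i = x" using d assms(3) unfolding avail_bundles_def by force
    moreover have "d \<in> avail_bundles n p A j"
      unfolding avail_bundles_def
    proof (intro CollectI conjI allI impI)
      show "length d = p" using d unfolding avail_bundles_def by simp
      fix l assume l: "l < p"
      show "case A j l of None \<Rightarrow> d ! l \<in> remaining n A l | Some x \<Rightarrow> d ! l = x"
      proof (cases "l = i")
        case True then show ?thesis using assms \<open>d ! i = x\<close> by simp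
      next
        case False
        have h: "\<forall>l<p. case (A(j := (A j)(i := Some x))) j l of None \<Rightarrow> d ! l \<in> remaining n (A(j := (A j)(i := Some x))) l | Some x \<Rightarrow> d ! l = x"
          using d unfolding avail_bundles_def by blast
        show ?thesis using r[OF False] h[rule_format, OF l] False by (cases "A j l") simp_all
      qed
    qed
    ultimately show "d \<in> {d \<in> avail_bundles n p A j. d ! i = x}" by simp
  next
    fix d assume d: "d \<in> {d \<in> avail_bundles n p A j. d ! i = x}"
    show "d \<in> avail_bundles n p (A(j := (A j)(i := Some x))) j"
      unfolding avail_bundles_def
    proof (intro CollectI conjI allI impI)
      show "length d = p" using d unfolding avail_bundles_def by simp
      fix l assume l: "l < p"
      show "case (A(j := (A j)(i := Some x))) j l of None \<Rightarrow> d ! l \<in> remaining n (A(j := (A j)(i := Some x))) l | Some x \<Rightarrow> d ! l = x"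
      proof (cases "l = i")
        case True then show ?thesis using d by simp
      next
        case False
        have h: "\<forall>l<p. case A j l of None \<Rightarrow> d ! l \<in> remaining n A l | Some x \<Rightarrow> d ! l = x"
          using d unfolding avail_bundles_def by blast
        show ?thesis using r[OF False] h[rule_format, OF l] False by (cases "A j l") simp_all
      qed
    qed
  qed
qed

lemma avail_other:
  assumes "j' \<noteq> j" "A j i = None"
  shows "avail_bundles n p (A(j := (A j)(i := Some x))) j' \<subseteq> avail_bundles n p A j'"
proof
  fix d assume d: "d \<in> avail_bundles n p (A(j := (A j)(i := Some x))) j'"
  have sub: "\<And>l. remaining n (A(j := (A j)(i := Some x))) l \<subseteq> remaining n A l"
  proof -
    fix l show "remaining n (A(j := (A j)(i := Some x))) l \<subseteq> remaining n A l"
      by (cases "l = i") (simp_all add: remaining_step[of A j i, OF assms(2)] remaining_step_same)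
  qed
  show "d \<in> avail_bundles n p A j'"
    unfolding avail_bundles_def
  proof (intro CollectI conjI allI impI)
    show "length d = p" using d unfolding avail_bundles_def by simp
    fix l assume l: "l < p"
    have "case (A(j := (A j)(i := Some x))) j' l of None \<Rightarrow> d ! l \<in> remaining n (A(j := (A j)(i := Some x))) l | Some x \<Rightarrow> d ! l = x"
      using d l unfolding avail_bundles_def by blast
    then show "case A j' l of None \<Rightarrow> d ! l \<in> remaining n A l | Some x \<Rightarrow> d ! l = x"
      using assms(1) sub[of l] by (cases "A j' l") auto
  qed
qed

lemma avail_upd:
  assumes "d \<in> avail_bundles n p A j" "A j i = None" "y \<in> remaining n A i" "i < p"
  shows "d[i := y] \<in> avail_bundles n p A j" "d[i := y] ! i = y"
proof -
  have h: "length d = p" "\<forall>l<p. case A j l of None \<Rightarrow> d ! l \<in> remaining n A l | Some x \<Rightarrow> d ! l = x"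
    using assms(1) unfolding avail_bundles_def by blast+
  show "d[i := y] \<in> avail_bundles n p A j"
    unfolding avail_bundles_def
  proof (intro CollectI conjI allI impI)
    show "length (d[i := y]) = p" using h by simp
    fix l assume l: "l < p"
    show "case A j l of None \<Rightarrow> d[i := y] ! l \<in> remaining n A l | Some x \<Rightarrow> d[i := y] ! l = x"
    proof (cases "l = i")
      case True then show ?thesis using assms h by simp
    next
      case False
      have e: "d[i := y] ! l = d ! l" using False by (metis nth_list_update_neq)
      show ?thesis unfolding e using h(2)[rule_format, OF l] .
    qed
  qed
  show "d[i := y] ! i = y" using assms unfolding avail_bundles_def by simp
qed

lemma slice_bound:
  fixes R :: "nat list \<Rightarrow> nat"
  assumes inj: "inj_on R (bundles n p)" and sub: "avail_bundles n p A j \<subseteq> bundles n p"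
    and ne: "avail_bundles n p A j \<noteq> {}" and none: "A j i = None" and ip: "i < p"
    and Sne: "remaining n A i \<noteq> {}"
  shows "Max (R ` {d \<in> avail_bundles n p A j. d ! i = pess_choice n p R A j i}) + (card (remaining n A i) - 1)
          \<le> Max (R ` avail_bundles n p A j)"
proof -
  define V where "V = avail_bundles n p A j"
  define S where "S = remaining n A i"
  define f where "f = (\<lambda>y. Max (R ` {d \<in> V. d ! i = y}))"
  define x where "x = pess_choice n p R A j i"
  have finV: "finite V" unfolding V_def using sub bundles_finite finite_subset by blast
  have slne: "{d \<in> V. d ! i = y} \<noteq> {}" if "y \<in> S" for y
  proof -
    obtain d where "d \<in> V" using ne V_def by blast
    then show ?thesis using avail_upd[of d n p A j i y] none that ip unfolding V_def S_def by blast
  qed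
  have fin_sl: "finite {d \<in> V. d ! i = y}" for y using finV by simp
  have fmax: "\<exists>d\<in>V. d ! i = y \<and> f y = R d" if "y \<in> S" for y
  proof -
    have "f y \<in> R ` {d \<in> V. d ! i = y}" unfolding f_def
      using Max_in[of "R ` {d \<in> V. d ! i = y}"] fin_sl slne[OF that] by blast
    then show ?thesis by blast
  qed
  have finj: "inj_on f S"
  proof (rule inj_onI)
    fix y y' assume y: "y \<in> S" and y': "y' \<in> S" and eq: "f y = f y'"
    obtain d where d: "d \<in> V" "d ! i = y" "f y = R d" using fmax[OF y] by blast
    obtain d' where d': "d' \<in> V" "d' ! i = y'" "f y' = R d'" using fmax[OF y'] by blast
    have "R d = R d'" using d d' eq by simp
    then have "d = d'" using inj d(1) d'(1) sub V_def inj_on_eq_iff by (metis subsetD)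
    then show "y = y'" using d d' by simp
  qed
  have fle: "f y \<le> Max (R ` V)" if yS: "y \<in> S" for y
  proof -
    obtain d where d: "d \<in> V" "d ! i = y" "f y = R d" using fmax[OF yS] by blast
    then show ?thesis using finV by simp
  qed
  have finS: "finite S" unfolding S_def by simp
  have xS: "x \<in> S" unfolding x_def S_def using pess_in[OF Sne] .
  have fx: "f x \<le> f y" if "y \<in> S" for y
    unfolding x_def pess_choice_def using arg_min_least[OF finS, where f=f and y=y] Sne that
    unfolding S_def f_def V_def by simp
  have "f ` S \<subseteq> {f x .. Max (R ` V)}" using fx fle by auto
  then have "card (f ` S) \<le> card {f x .. Max (R ` V)}" by (intro card_mono) auto
  moreover have "card (f ` S) = card S" using card_image[OF finj] .
  ultimately have "card S \<le> Suc (Max (R ` V)) - f x" by simp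
  moreover have "card S \<ge> 1" using Sne finS S_def by (simp add: Suc_leI card_gt_0_iff)
  ultimately show ?thesis unfolding f_def x_def V_def S_def by linarith
qed



context octx begin

definition tau :: "nat \<Rightarrow> nat \<Rightarrow> nat" where
  "tau j l = length (takeWhile (\<lambda>a. a \<noteq> (j,l)) Ord)"
definition item :: "nat \<Rightarrow> nat \<Rightarrow> nat" where
  "item j l = cnt l (take (tau j l) Ord)"
definition lossk :: "nat \<Rightarrow> nat \<Rightarrow> nat" where
  "lossk k j = (\<Sum>l \<in> {l. l < p \<and> (j,l) \<in> set (take k Ord)}. n - 1 - item j l)"
definition loss :: "nat \<Rightarrow> nat" where
  "loss j = (\<Sum>l<p. n - 1 - item j l)"

lemma tau_nth: assumes "k < length Ord" "Ord ! k = (j,l)" shows "tau j l = k"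
proof -
  have eq: "Ord = take k Ord @ Ord ! k # drop (Suc k) Ord" using assms(1) by (rule id_take_nth_drop)
  have all: "\<forall>a\<in>set (take k Ord). a \<noteq> (j,l)" using not_in_take[OF assms(1)] assms(2) by auto
  have "takeWhile (\<lambda>a. a \<noteq> (j,l)) Ord = takeWhile (\<lambda>a. a \<noteq> (j,l)) (take k Ord @ Ord ! k # drop (Suc k) Ord)"
    by (rule arg_cong[OF eq])
  also have "\<dots> = take k Ord @ takeWhile (\<lambda>a. a \<noteq> (j,l)) (Ord ! k # drop (Suc k) Ord)"
    by (rule takeWhile_append2) (use all in blast)
  also have "\<dots> = take k Ord" using assms(2) by simp
  finally show ?thesis unfolding tau_def using assms(1) by simp
qed

lemma tau_ex: assumes "j < n" "l < p" shows "tau j l < length Ord" "Ord ! tau j l = (j,l)"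
proof -
  have "(j,l) \<in> set Ord" using setO assms by simp
  then obtain k where k: "k < length Ord" "Ord ! k = (j,l)" using in_set_conv_nth[of "(j,l)" Ord] by blast
  then show "tau j l < length Ord" "Ord ! tau j l = (j,l)" using tau_nth[OF k] by simp_all
qed

lemma item_nth: "k < length Ord \<Longrightarrow> Ord ! k = (j,i) \<Longrightarrow> item j i = cnt i (take k Ord)"
  unfolding item_def using tau_nth by simp

lemma lossk0: "lossk 0 j = 0" unfolding lossk_def by simp

lemma lossk_Suc: assumes k: "k < length Ord" and ji: "Ord ! k = (j,i)"
  shows "lossk (Suc k) j0 = lossk k j0 + (if j = j0 then n - 1 - cnt i (take k Ord) else 0)"
proof -
  have setS: "set (take (Suc k) Ord) = insert (j,i) (set (take k Ord))"
    using take_Suc_set[OF k] ji by simp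
  have nin: "(j,i) \<notin> set (take k Ord)" using not_in_take[OF k] ji by simp
  have ip: "i < p" using nth_in[OF k] ji by simp
  show ?thesis
  proof (cases "j = j0")
    case True
    have "{l. l < p \<and> (j0,l) \<in> set (take (Suc k) Ord)} = insert i {l. l < p \<and> (j0,l) \<in> set (take k Ord)}"
      using setS True ip by auto
    moreover have "i \<notin> {l. l < p \<and> (j0,l) \<in> set (take k Ord)}" using nin True by simp
    moreover have "finite {l. l < p \<and> (j0,l) \<in> set (take k Ord)}" by simp
    ultimately show ?thesis unfolding lossk_def using True item_nth[OF k ji] by simp
  next
    case False
    have "{l. l < p \<and> (j0,l) \<in> set (take (Suc k) Ord)} = {l. l < p \<and> (j0,l) \<in> set (take k Ord)}"
      using setS False by auto
    then show ?thesis unfolding lossk_def using False by simp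
  qed
qed

lemma lossk_full: "j < n \<Longrightarrow> lossk (length Ord) j = loss j"
proof -
  assume j: "j < n"
  have "{l. l < p \<and> (j,l) \<in> set (take (length Ord) Ord)} = {..<p}" using setO j by auto
  then show ?thesis unfolding lossk_def loss_def by simp
qed

lemma avail_sub: "k \<le> length Ord \<Longrightarrow> avail_bundles n p (run P k) j \<subseteq> bundles n p"
proof
  fix d assume k: "k \<le> length Ord" and d: "d \<in> avail_bundles n p (run P k) j"
  have I2: "\<forall>j l x. run P k j l = Some x \<longrightarrow> x < n" using run_inv[OF k] by blast
  have "d ! l < n" if l: "l < p" for l
  proof -
    have "case run P k j l of None \<Rightarrow> d ! l \<in> remaining n (run P k) l | Some x \<Rightarrow> d ! l = x"
      using d l unfolding avail_bundles_def by blast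
    then show ?thesis using I2 remaining_sub[of n "run P k" l] by (cases "run P k j l") auto
  qed
  then show "d \<in> bundles n p" using d unfolding bundles_def avail_bundles_def by simp
qed

lemma avail_ne: assumes k: "k \<le> length Ord" and j: "j < n" shows "avail_bundles n p (run P k) j \<noteq> {}"
proof -
  define A where "A = run P k"
  have I1: "\<forall>j l. A j l = None \<longleftrightarrow> (j,l) \<notin> set (take k Ord)"
   and I3: "\<forall>l. card (remaining n A l) + cnt l (take k Ord) = n" using run_inv[OF k, of P] unfolding A_def by blast+
  have rne: "remaining n A l \<noteq> {}" if "A j l = None" for l
  proof -
    have "(j,l) \<notin> set (take k Ord)" using I1 that by blast
    then have "cnt l (take k Ord) < n" using cnt_less[OF distinct_take[OF dist] take_fst _ j] by blast
    then have "card (remaining n A l) \<noteq> 0" using I3[rule_format, of l] by linarith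
    then show ?thesis by auto
  qed
  define d where "d = map (\<lambda>l. case A j l of Some x \<Rightarrow> x | None \<Rightarrow> (SOME y. y \<in> remaining n A l)) [0..<p]"
  have "d \<in> avail_bundles n p A j"
    unfolding avail_bundles_def
  proof (intro CollectI conjI allI impI)
    show "length d = p" unfolding d_def by simp
    fix l assume l: "l < p"
    show "case A j l of None \<Rightarrow> d ! l \<in> remaining n A l | Some x \<Rightarrow> d ! l = x"
    proof (cases "A j l")
      case None then show ?thesis using l rne[OF None] unfolding d_def by (simp add: some_in_eq)
    next
      case (Some x) then show ?thesis using l unfolding d_def by simp
    qed
  qed
  then show ?thesis unfolding A_def by blast
qed

lemma csam_run_eq: "csam_run n p P Ord = run P (length Ord)"
  unfolding csam_run_def run_def by simp

lemma avail_final: assumes j: "j < n"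
  shows "avail_bundles n p (run P (length Ord)) j = {csam_outcome n p Ord P j}"
proof -
  define A where "A = run P (length Ord)"
  have I1: "\<forall>j l. A j l = None \<longleftrightarrow> (j,l) \<notin> set (take (length Ord) Ord)" using run_inv[of "length Ord" P] unfolding A_def by simp
  have some: "A j l \<noteq> None" if "l < p" for l using I1 setO j that by simp
  have "avail_bundles n p A j \<subseteq> {csam_outcome n p Ord P j}"
  proof
    fix d assume d: "d \<in> avail_bundles n p A j"
    have "d = csam_outcome n p Ord P j"
    proof (rule nth_equalityI)
      show "length d = length (csam_outcome n p Ord P j)" using d unfolding avail_bundles_def csam_outcome_def by simp
      fix l assume "l < length d"
      then have l: "l < p" using d unfolding avail_bundles_def by simp
      have "case A j l of None \<Rightarrow> d ! l \<in> remaining n A l | Some x \<Rightarrow> d ! l = x"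
        using d l unfolding avail_bundles_def by blast
      then show "d ! l = csam_outcome n p Ord P j ! l"
        using some[OF l] l unfolding csam_outcome_def csam_run_eq A_def[symmetric] by (cases "A j l") simp_all
    qed
    then show "d \<in> {csam_outcome n p Ord P j}" by simp
  qed
  moreover have "avail_bundles n p A j \<noteq> {}" using avail_ne[OF _ j] A_def by simp
  ultimately show ?thesis unfolding A_def by blast
qed

lemma upper:
  assumes vp: "valid_profile n p P" and j0: "j0 < n"
  shows "P j0 (csam_outcome n p Ord P j0) + loss j0 \<le> n ^ p"
proof -
  define R where "R = P j0"
  have bij: "bij_betw R (bundles n p) {1..n^p}" using vp j0 unfolding valid_profile_def valid_pref_def R_def by simp
  have inj: "inj_on R (bundles n p)" using bij_betw_imp_inj_on[OF bij] .
  have img: "R ` bundles n p = {1..n^p}" using bij_betw_imp_surj_on[OF bij] .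
  have main: "Max (R ` avail_bundles n p (run P k) j0) + lossk k j0 \<le> n ^ p" if "k \<le> length Ord" for k
    using that
  proof (induction k)
    case 0
    have "Max (R ` avail_bundles n p (run P 0) j0) \<le> n ^ p"
    proof -
      have "R ` avail_bundles n p (run P 0) j0 \<subseteq> {1..n^p}" using avail_sub[of 0] img by blast
      moreover have "R ` avail_bundles n p (run P 0) j0 \<noteq> {}" using avail_ne[of 0 j0] j0 by simp
      ultimately show ?thesis using Max_le_iff[of "R ` avail_bundles n p (run P 0) j0" "n^p"]
        by (meson atLeastAtMost_iff finite_atLeastAtMost finite_subset subsetD)
    qed
    then show ?case by (simp add: lossk0)
  next
    case (Suc k)
    then have k: "k < length Ord" by simp
    have IH: "Max (R ` avail_bundles n p (run P k) j0) + lossk k j0 \<le> n ^ p" using Suc by simp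
    obtain j i where ji: "Ord ! k = (j,i)" by (cases "Ord ! k")
    define A where "A = run P k"
    define x where "x = pess_choice n p (P j) A j i"
    have I1: "\<forall>j l. A j l = None \<longleftrightarrow> (j,l) \<notin> set (take k Ord)"
     and I3: "\<forall>l. card (remaining n A l) + cnt l (take k Ord) = n" using run_inv[of k P] k unfolding A_def by auto
    have Anone: "A j i = None" using I1 not_in_take[OF k] ji by simp
    have cl: "cnt i (take k Ord) < n" using cnt_take_less[OF k ji] .
    have cardr: "card (remaining n A i) = n - cnt i (take k Ord)" using I3[rule_format, of i] by linarith
    then have ne: "remaining n A i \<noteq> {}" using cl by (intro notI) simp
    have ip: "i < p" using nth_in[OF k] ji by simp
    have xin: "x \<in> remaining n A i" unfolding x_def by (rule pess_in[OF ne])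
    have runS: "run P (Suc k) = A(j := (A j)(i := Some x))"
      unfolding A_def x_def by (rule run_Suc[OF k ji])
    have subA: "avail_bundles n p A j0 \<subseteq> bundles n p" using avail_sub[of k] k A_def by simp
    have neA: "avail_bundles n p A j0 \<noteq> {}" using avail_ne[of k j0] k j0 A_def by simp
    have neS: "avail_bundles n p (run P (Suc k)) j0 \<noteq> {}" using avail_ne[of "Suc k" j0] Suc.prems j0 by simp
    have finA: "finite (avail_bundles n p A j0)" using subA bundles_finite finite_subset by blast
    show ?case
    proof (cases "j = j0")
      case True
      have av: "avail_bundles n p (run P (Suc k)) j0 = {d \<in> avail_bundles n p A j0. d ! i = x}"
        unfolding runS True using avail_pick[of A j0 i x n p] Anone xin ip True by simp
      have sb: "Max (R ` {d \<in> avail_bundles n p A j0. d ! i = x}) + (card (remaining n A i) - 1)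
          \<le> Max (R ` avail_bundles n p A j0)"
        using slice_bound[OF inj subA neA _ ip ne] Anone True unfolding x_def R_def by simp
      have ls: "lossk (Suc k) j0 = lossk k j0 + (n - 1 - cnt i (take k Ord))"
        using lossk_Suc[OF k ji] True by simp
      have IH': "Max (R ` avail_bundles n p A j0) + lossk k j0 \<le> n ^ p" using IH unfolding A_def .
      show ?thesis unfolding av ls using IH' sb cardr cl by linarith
    next
      case False
      have "avail_bundles n p (run P (Suc k)) j0 \<subseteq> avail_bundles n p A j0"
        unfolding runS using avail_other[of j0 j A i n p x] False Anone by simp
      then have "Max (R ` avail_bundles n p (run P (Suc k)) j0) \<le> Max (R ` avail_bundles n p A j0)"
        using neS finA by (intro Max_mono) auto
      moreover have "lossk (Suc k) j0 = lossk k j0" using lossk_Suc[OF k ji] False by simp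
      ultimately show ?thesis using IH unfolding A_def by linarith
    qed
  qed
  have "Max (R ` avail_bundles n p (run P (length Ord)) j0) + lossk (length Ord) j0 \<le> n ^ p"
    using main by simp
  then show ?thesis using avail_final[OF j0] lossk_full[OF j0] R_def by simp
qed

end


lemma sum_tri: "2 * (\<Sum>c<m. (m::nat) - 1 - c) = m * (m - 1)"
proof -
  have "(\<Sum>c<m. m - 1 - c) = (\<Sum>c<m. c)"
    using sum.nat_diff_reindex[of "\<lambda>c. c" m] by simp
  moreover have "2 * (\<Sum>c<m. c) = m * (m - 1)"
  proof (induction m)
    case 0 then show ?case by simp
  next
    case (Suc m) then show ?case by (cases m) (simp_all add: algebra_simps)
  qed
  ultimately show ?thesis by simp
qed

context octx begin

lemma sum_lossk: "k \<le> length Ord \<Longrightarrow>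
  (\<Sum>j<n. lossk k j) = (\<Sum>l<p. \<Sum>c<cnt l (take k Ord). n - 1 - c)"
proof (induction k)
  case 0 then show ?case by (simp add: lossk0 cnt_def)
next
  case (Suc k)
  then have k: "k < length Ord" by simp
  obtain j i where ji: "Ord ! k = (j,i)" by (cases "Ord ! k")
  have jn: "j < n" and ip: "i < p" using nth_in[OF k] ji by simp_all
  have "(\<Sum>j'<n. lossk (Suc k) j') = (\<Sum>j'<n. lossk k j' + (if j = j' then n - 1 - cnt i (take k Ord) else 0))"
    using lossk_Suc[OF k ji] by simp
  also have "\<dots> = (\<Sum>j'<n. lossk k j') + (n - 1 - cnt i (take k Ord))"
    using jn by (simp add: sum.distrib)
  finally have L: "(\<Sum>j'<n. lossk (Suc k) j') = (\<Sum>j'<n. lossk k j') + (n - 1 - cnt i (take k Ord))" .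
  have cS: "cnt l (take (Suc k) Ord) = cnt l (take k Ord) + (if l = i then 1 else 0)" for l
    using k ji by (simp add: take_Suc_conv_app_nth)
  have "(\<Sum>l<p. \<Sum>c<cnt l (take (Suc k) Ord). n - 1 - c)
      = (\<Sum>l<p. (\<Sum>c<cnt l (take k Ord). n - 1 - c) + (if l = i then n - 1 - cnt i (take k Ord) else 0))"
    by (rule sum.cong) (simp_all add: cS)
  also have "\<dots> = (\<Sum>l<p. \<Sum>c<cnt l (take k Ord). n - 1 - c) + (n - 1 - cnt i (take k Ord))"
    using ip by (simp add: sum.distrib)
  finally show ?case using L Suc by simp
qed

lemma cnt_full: "l < p \<Longrightarrow> cnt l Ord = n"
proof -
  assume l: "l < p"
  have "{j. (j,l) \<in> set Ord} = {..<n}" using setO l by auto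
  then show ?thesis using cnt_card[OF dist, of l] by simp
qed

lemma sum_loss: "2 * (\<Sum>j<n. loss j) = p * (n * (n - 1))"
proof -
  have "(\<Sum>j<n. loss j) = (\<Sum>j<n. lossk (length Ord) j)" using lossk_full by simp
  also have "\<dots> = (\<Sum>l<p. \<Sum>c<cnt l Ord. n - 1 - c)" using sum_lossk[of "length Ord"] by simp
  also have "\<dots> = (\<Sum>l<p. \<Sum>c<n. n - 1 - c)" using cnt_full by simp
  finally have "(\<Sum>j<n. loss j) = p * (\<Sum>c<n. n - 1 - c)" by simp
  then show ?thesis using sum_tri[of n] by (metis mult.left_commute)
qed

lemma exists_small_loss: assumes "even p" shows "\<exists>j<n. loss j \<le> (n - 1) * (p div 2)"
proof (rule ccontr)
  assume "\<not> ?thesis"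
  then have "\<forall>j\<in>{..<n}. (n - 1) * (p div 2) < loss j" by auto
  then have "(\<Sum>j<n. (n - 1) * (p div 2)) < (\<Sum>j<n. loss j)"
    using n1 by (intro sum_strict_mono) (auto simp: lessThan_empty_iff)
  then have "2 * (n * ((n - 1) * (p div 2))) < 2 * (\<Sum>j<n. loss j)" by simp
  also have "\<dots> = p * (n * (n - 1))" by (rule sum_loss)
  also have "\<dots> = 2 * (n * ((n - 1) * (p div 2)))" using assms by (elim evenE) (simp add: algebra_simps)
  finally show False by simp
qed

end


definition blk :: "nat list \<Rightarrow> nat \<Rightarrow> (nat \<times> nat) list" where
  "blk K i = map (\<lambda>j. (j, i)) (if even i then K else rev K)"

lemma bal_def2: "balanced_order p K = concat (map (blk K) [0..<p])"
  unfolding balanced_order_def blk_def by simp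

lemma bal_Suc: "balanced_order (Suc p) K = balanced_order p K @ blk K p"
  unfolding bal_def2 by simp

lemma bal_set: "set (balanced_order p K) = set K \<times> {..<p}"
proof (induction p)
  case 0 then show ?case by (simp add: bal_def2)
next
  case (Suc p)
  have b: "set (blk K p) = set K \<times> {p}" unfolding blk_def by (cases "even p") auto
  have "set K \<times> {..<Suc p} = set K \<times> {..<p} \<union> set K \<times> {p}" by (auto simp: lessThan_Suc)
  then show ?case unfolding bal_Suc set_append b Suc.IH by simp
qed

lemma bal_valid: assumes "valid_agent_order n K" shows "valid_order n p (balanced_order p K)"
proof -
  have dK: "distinct K" and sK: "set K = {..<n}" using assms unfolding valid_agent_order_def by auto
  have "distinct (balanced_order p K)"
  proof (induction p)
    case 0 then show ?case by (simp add: bal_def2)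
  next
    case (Suc p)
    have "distinct (blk K p)" unfolding blk_def using dK by (simp add: distinct_map inj_on_def)
    moreover have "set (balanced_order p K) \<inter> set (blk K p) = {}" unfolding bal_set blk_def by auto
    ultimately show ?case using Suc by (simp add: bal_Suc)
  qed
  then show ?thesis unfolding valid_order_def bal_set sK by simp
qed

lemma takeWhile_split: assumes "j \<notin> set us" shows "takeWhile (\<lambda>x. x \<noteq> j) (us @ j # vs) = us"
proof -
  have "takeWhile (\<lambda>x. x \<noteq> j) (us @ j # vs) = us @ takeWhile (\<lambda>x. x \<noteq> j) (j # vs)"
    by (rule takeWhile_append2) (use assms in blast)
  then show ?thesis by simp
qed

lemma bal_takeWhile:
  assumes dK: "distinct K" and l: "l < p" and j: "j \<in> set K"
  shows "cnt l (takeWhile (\<lambda>a. a \<noteq> (j,l)) (balanced_order p K))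
       = length (takeWhile (\<lambda>x. x \<noteq> j) (if even l then K else rev K))"
proof -
  define L where "L = (if even l then K else rev K)"
  have jL: "j \<in> set L" using j unfolding L_def by simp
  obtain us vs where L: "L = us @ j # vs" and ju: "j \<notin> set us" using split_list_first[OF jL] by blast
  have "[0..<p] = [0..<l] @ [l..<p]"
  proof -
    have "[0..<l + (p - l)] = [0..<l] @ [l..<l + (p - l)]" by (rule upt_add_eq_append) simp
    then show ?thesis using l by simp
  qed
  moreover have "[l..<p] = l # [Suc l..<p]" using l by (simp add: upt_conv_Cons)
  ultimately have bp: "balanced_order p K = balanced_order l K @ blk K l @ concat (map (blk K) [Suc l..<p])"
    unfolding bal_def2 by simp
  have bl: "blk K l = map (\<lambda>j. (j,l)) us @ (j,l) # map (\<lambda>j. (j,l)) vs"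
    unfolding blk_def L_def[symmetric] L by simp
  have nb: "\<forall>a\<in>set (balanced_order l K). a \<noteq> (j,l)" unfolding bal_set by auto
  have nu: "\<forall>a\<in>set (map (\<lambda>j. (j,l)) us). a \<noteq> (j,l)" using ju by auto
  have nu': "(j,l) \<notin> set (map (\<lambda>j. (j,l)) us)" using nu by blast
  have "takeWhile (\<lambda>a. a \<noteq> (j,l)) (balanced_order p K) = balanced_order l K @ takeWhile (\<lambda>a. a \<noteq> (j,l)) (blk K l @ concat (map (blk K) [Suc l..<p]))"
    unfolding bp by (rule takeWhile_append2) (use nb in blast)
  also have "\<dots> = balanced_order l K @ map (\<lambda>j. (j,l)) us"
    unfolding bl using takeWhile_split[OF nu', of "map (\<lambda>j. (j,l)) vs @ concat (map (blk K) [Suc l..<p])"] by simp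
  finally have "takeWhile (\<lambda>a. a \<noteq> (j,l)) (balanced_order p K) = balanced_order l K @ map (\<lambda>j. (j,l)) us" .
  moreover have "cnt l (balanced_order l K) = 0"
    unfolding cnt_def by (rule length_0_conv[THEN iffD2]) (auto simp: filter_empty_conv bal_set)
  moreover have "cnt l (map (\<lambda>j. (j,l)) us) = length us" unfolding cnt_def by simp
  moreover have "takeWhile (\<lambda>x. x \<noteq> j) L = us" unfolding L by (rule takeWhile_split[OF ju])
  ultimately show ?thesis unfolding L_def by simp
qed

lemma ab_sum: assumes dK: "distinct K" and j: "j \<in> set K"
  shows "length (takeWhile (\<lambda>x. x \<noteq> j) K) + length (takeWhile (\<lambda>x. x \<noteq> j) (rev K)) = length K - 1"
proof -
  obtain us vs where K: "K = us @ j # vs" and ju: "j \<notin> set us" using split_list_first[OF j] by blast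
  have jv: "j \<notin> set vs" using dK K by simp
  have "takeWhile (\<lambda>x. x \<noteq> j) K = us" unfolding K by (rule takeWhile_split[OF ju])
  moreover have "takeWhile (\<lambda>x. x \<noteq> j) (rev K) = rev vs"
    unfolding K using takeWhile_split[of j "rev vs" "rev us"] jv by simp
  ultimately show ?thesis unfolding K by simp
qed

context octx begin

lemma item_tw: "item j l = cnt l (takeWhile (\<lambda>a. a \<noteq> (j,l)) Ord)"
  unfolding item_def tau_def by (simp only: takeWhile_eq_take[of "\<lambda>a. a \<noteq> (j,l)" Ord, symmetric])

lemma loss_balanced:
  assumes O: "Ord = balanced_order p K" and vK: "valid_agent_order n K" and ev: "even p" and j: "j < n"
  shows "loss j = (n - 1) * (p div 2)"
proof -
  have dK: "distinct K" and sK: "set K = {..<n}" using vK unfolding valid_agent_order_def by auto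
  have lenK: "length K = n" using distinct_card[OF dK] sK by simp
  have jK: "j \<in> set K" using sK j by simp
  define a where "a = length (takeWhile (\<lambda>x. x \<noteq> j) K)"
  define b where "b = length (takeWhile (\<lambda>x. x \<noteq> j) (rev K))"
  have ab: "a + b = n - 1" using ab_sum[OF dK jK] lenK unfolding a_def b_def by simp
  have it: "item j l = (if even l then a else b)" if "l < p" for l
    unfolding item_tw unfolding O bal_takeWhile[OF dK that jK] a_def b_def by simp
  have main: "(\<Sum>l<2*q. n - 1 - item j l) = q * (n - 1)" if "2 * q \<le> p" for q
    using that
  proof (induction q)
    case 0 then show ?case by simp
  next
    case (Suc q)
    have e: "2 * Suc q = Suc (Suc (2 * q))" by simp
    have "(\<Sum>l<2 * Suc q. n - 1 - item j l) = (\<Sum>l<2*q. n - 1 - item j l) + (n - 1 - item j (2*q)) + (n - 1 - item j (Suc (2*q)))"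
      unfolding e by simp
    also have "\<dots> = q * (n - 1) + (n - 1 - a) + (n - 1 - b)"
      using Suc it[of "2*q"] it[of "Suc (2*q)"] by simp
    also have "\<dots> = Suc q * (n - 1)" using ab by simp
    finally show ?case .
  qed
  have e2: "2 * (p div 2) = p" using ev by simp
  have "(\<Sum>l<p. n - 1 - item j l) = (p div 2) * (n - 1)" using main[of "p div 2"] e2 by simp
  then show ?thesis unfolding loss_def by simp
qed

end


definition rk :: "(nat list \<Rightarrow> nat) \<Rightarrow> nat \<Rightarrow> nat \<Rightarrow> nat list \<Rightarrow> nat" where
  "rk \<kappa> n p d = card {d' \<in> bundles n p. \<kappa> d' \<le> \<kappa> d}"

lemma rk_less:
  assumes inj: "inj_on \<kappa> (bundles n p)" and d: "d \<in> bundles n p" and d': "d' \<in> bundles n p"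
    and lt: "\<kappa> d < \<kappa> d'"
  shows "rk \<kappa> n p d < rk \<kappa> n p d'"
proof -
  have "{e \<in> bundles n p. \<kappa> e \<le> \<kappa> d} \<subseteq> {e \<in> bundles n p. \<kappa> e \<le> \<kappa> d'}"
    using lt by auto
  moreover have "d' \<in> {e \<in> bundles n p. \<kappa> e \<le> \<kappa> d'}" using d' by simp
  moreover have "d' \<notin> {e \<in> bundles n p. \<kappa> e \<le> \<kappa> d}" using lt by simp
  ultimately have "{e \<in> bundles n p. \<kappa> e \<le> \<kappa> d} \<subset> {e \<in> bundles n p. \<kappa> e \<le> \<kappa> d'}" by blast
  then show ?thesis unfolding rk_def using bundles_finite by (intro psubset_card_mono) auto
qed

lemma rk_valid: assumes inj: "inj_on \<kappa> (bundles n p)" shows "valid_pref n p (rk \<kappa> n p)"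
proof -
  have injr: "inj_on (rk \<kappa> n p) (bundles n p)"
  proof (rule inj_onI)
    fix d d' assume d: "d \<in> bundles n p" and d': "d' \<in> bundles n p" and eq: "rk \<kappa> n p d = rk \<kappa> n p d'"
    show "d = d'"
    proof (rule ccontr)
      assume "d \<noteq> d'"
      then have "\<kappa> d \<noteq> \<kappa> d'" using inj d d' inj_on_eq_iff by metis
      then have "\<kappa> d < \<kappa> d' \<or> \<kappa> d' < \<kappa> d" by linarith
      then show False using rk_less[OF inj d d'] rk_less[OF inj d' d] eq by auto
    qed
  qed
  have sub: "rk \<kappa> n p ` bundles n p \<subseteq> {1..n^p}"
  proof
    fix r assume "r \<in> rk \<kappa> n p ` bundles n p"
    then obtain d where d: "d \<in> bundles n p" and r: "r = rk \<kappa> n p d" by blast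
    have "{e \<in> bundles n p. \<kappa> e \<le> \<kappa> d} \<noteq> {}" using d by blast
    moreover have fin: "finite {e \<in> bundles n p. \<kappa> e \<le> \<kappa> d}" using bundles_finite by simp
    ultimately have "r \<ge> 1" unfolding r rk_def by (simp add: Suc_leI card_gt_0_iff)
    moreover have "card {e \<in> bundles n p. \<kappa> e \<le> \<kappa> d} \<le> card (bundles n p)"
      using bundles_finite by (intro card_mono) auto
    then have "r \<le> n^p" unfolding r rk_def bundles_card .
    ultimately show "r \<in> {1..n^p}" by simp
  qed
  have "card (rk \<kappa> n p ` bundles n p) = n^p" using card_image[OF injr] bundles_card by simp
  then have "rk \<kappa> n p ` bundles n p = {1..n^p}" using sub by (intro card_subset_eq) auto
  then show ?thesis unfolding valid_pref_def bij_betw_def using injr by simp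
qed

lemma rk_ge:
  assumes d: "d \<in> bundles n p"
  shows "n ^ p - card {e \<in> bundles n p. \<kappa> d < \<kappa> e} \<le> rk \<kappa> n p d"
proof -
  have "bundles n p = {e \<in> bundles n p. \<kappa> e \<le> \<kappa> d} \<union> {e \<in> bundles n p. \<kappa> d < \<kappa> e}" by auto
  moreover have "{e \<in> bundles n p. \<kappa> e \<le> \<kappa> d} \<inter> {e \<in> bundles n p. \<kappa> d < \<kappa> e} = {}" by auto
  ultimately have "card (bundles n p) = card {e \<in> bundles n p. \<kappa> e \<le> \<kappa> d} + card {e \<in> bundles n p. \<kappa> d < \<kappa> e}"
    using bundles_finite card_Un_disjoint[of "{e \<in> bundles n p. \<kappa> e \<le> \<kappa> d}" "{e \<in> bundles n p. \<kappa> d < \<kappa> e}"]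
    by simp
  then show ?thesis unfolding rk_def bundles_card by simp
qed

lemma choice_eq:
  fixes R :: "nat list \<Rightarrow> nat"
  assumes sub: "avail_bundles n p A j \<subseteq> bundles n p" and ne: "avail_bundles n p A j \<noteq> {}"
    and none: "A j i = None" and ip: "i < p" and c: "c \<in> remaining n A i"
    and strict: "\<And>y d. y \<in> remaining n A i \<Longrightarrow> y \<noteq> c \<Longrightarrow> d \<in> avail_bundles n p A j \<Longrightarrow> d ! i = c \<Longrightarrow>
                 \<exists>d'\<in>avail_bundles n p A j. d' ! i = y \<and> R d < R d'"
  shows "pess_choice n p R A j i = c"
proof -
  define V where "V = avail_bundles n p A j"
  define S where "S = remaining n A i"
  define f where "f = (\<lambda>y. Max (R ` {d \<in> V. d ! i = y}))"
  have finV: "finite V" unfolding V_def using sub bundles_finite finite_subset by blast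
  have slne: "{d \<in> V. d ! i = y} \<noteq> {}" if "y \<in> S" for y
  proof -
    obtain d where "d \<in> V" using ne V_def by blast
    then show ?thesis using avail_upd[of d n p A j i y] none that ip unfolding V_def S_def by blast
  qed
  obtain dc where dc: "dc \<in> V" "dc ! i = c" "f c = R dc"
  proof -
    have "f c \<in> R ` {d \<in> V. d ! i = c}" unfolding f_def
      using Max_in[of "R ` {d \<in> V. d ! i = c}"] finV slne c S_def by simp
    then show ?thesis using that by blast
  qed
  have lt: "f c < f y" if yS: "y \<in> S" and yc: "y \<noteq> c" for y
  proof -
    obtain d' where d': "d' \<in> V" "d' ! i = y" "R dc < R d'"
      using strict[of y dc] yS yc dc unfolding V_def S_def by blast
    have "R d' \<le> f y" unfolding f_def using d' finV by (intro Max_ge) auto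
    then show ?thesis using dc d' by simp
  qed
  define r where "r = pess_choice n p R A j i"
  have Sne: "S \<noteq> {}" using c S_def by blast
  have rS: "r \<in> S" unfolding r_def S_def using pess_in Sne S_def by blast
  have "\<not> (\<exists>x\<in>S. f x < f r)" unfolding r_def pess_choice_def f_def V_def S_def
    using arg_min_if_finite(2)[of S] Sne S_def by simp
  then have "r = c" using lt rS c S_def by blast
  then show ?thesis unfolding r_def .
qed

lemma sum_list_upd: "i < length (xs::nat list) \<Longrightarrow> sum_list (xs[i := y]) + xs ! i = sum_list xs + y"
proof (induction xs arbitrary: i)
  case Nil then show ?case by simp
next
  case (Cons a xs)
  show ?case
  proof (cases i)
    case 0 then show ?thesis by simp
  next
    case (Suc m)
    then have "m < length xs" using Cons.prems by simp
    then have "sum_list (xs[m := y]) + xs ! m = sum_list xs + y" by (rule Cons.IH)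
    then show ?thesis using Suc by simp
  qed
qed

lemma lin_inj: fixes a b a' b' M :: nat
  assumes "a * M + b = a' * M + b'" "b < M" "b' < M" shows "a = a' \<and> b = b'"
proof -
  have "\<not> a < a'" if "a * M + b = a' * M + b'" "b < M" for a a' b b' :: nat
  proof
    assume "a < a'"
    then have "Suc a * M \<le> a' * M" by (intro mult_le_mono1) simp
    then show False using that by simp
  qed
  then have "\<not> a < a'" "\<not> a' < a" using assms by metis+
  then have "a = a'" by simp
  then show ?thesis using assms by simp
qed



context octx begin

definition gB :: "nat list \<Rightarrow> nat" where
  "gB = (SOME h. bij_betw h (bundles n p) {0..<card (bundles n p)})"

lemma gB: "bij_betw gB (bundles n p) {0..<n^p}"
proof -
  have "\<exists>h. bij_betw h (bundles n p) {0..<card (bundles n p)}"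
    using ex_bij_betw_finite_nat[OF bundles_finite] .
  then have "bij_betw gB (bundles n p) {0..<card (bundles n p)}" unfolding gB_def by (rule someI_ex)
  then show ?thesis using bundles_card by simp
qed

lemma gB_lt: "d \<in> bundles n p \<Longrightarrow> gB d < n^p"
  using gB unfolding bij_betw_def by auto

lemma gB_inj: "inj_on gB (bundles n p)" using gB unfolding bij_betw_def by simp

definition k2 :: "nat list \<Rightarrow> nat" where
  "k2 d = sum_list d * n^p + gB d"

lemma k2_inj: "inj_on k2 (bundles n p)"
proof (rule inj_onI)
  fix d d' assume d: "d \<in> bundles n p" and d': "d' \<in> bundles n p" and eq: "k2 d = k2 d'"
  have "gB d = gB d'" using lin_inj[OF eq[unfolded k2_def] gB_lt[OF d] gB_lt[OF d']] by simp
  then show "d = d'" using gB_inj d d' inj_on_eq_iff by metis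
qed

lemma k2_upd: assumes "d \<in> bundles n p" "i < p" "d ! i < y"
  shows "k2 d < k2 (d[i := y])"
proof -
  have li: "i < length d" using assms unfolding bundles_def by simp
  have "sum_list (d[i := y]) + d ! i = sum_list d + y" by (rule sum_list_upd[OF li])
  then have "Suc (sum_list d) \<le> sum_list (d[i := y])" using assms(3) by linarith
  then have "Suc (sum_list d) * n^p \<le> sum_list (d[i := y]) * n^p" by (rule mult_le_mono1)
  then show ?thesis unfolding k2_def using gB_lt[OF assms(1)] by simp
qed

lemma mem_take: assumes "t < length Ord" shows "Ord ! t \<in> set (take k Ord) \<longleftrightarrow> t < k"
proof
  assume "Ord ! t \<in> set (take k Ord)"
  then obtain t' where t': "t' < length (take k Ord)" "take k Ord ! t' = Ord ! t" by (metis in_set_conv_nth)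
  then have "t' < k" "t' < length Ord" "Ord ! t' = Ord ! t" by auto
  then have "t' = t" using nth_eq_iff_index_eq[OF dist _ assms] by blast
  then show "t < k" using \<open>t' < k\<close> by simp
next
  assume "t < k"
  then have "take k Ord ! t = Ord ! t" "t < length (take k Ord)" using assms by auto
  then show "Ord ! t \<in> set (take k Ord)" by (metis nth_mem)
qed

lemma item_lt: "j < n \<Longrightarrow> l < p \<Longrightarrow> item j l < n"
  unfolding item_def using cnt_take_less[OF tau_ex] by blast

definition GS :: "state \<Rightarrow> nat \<Rightarrow> bool" where
  "GS A k \<longleftrightarrow> (\<forall>j l. A j l = (if (j,l) \<in> set (take k Ord) then Some (item j l) else None))
     \<and> (\<forall>l. remaining n A l = {cnt l (take k Ord)..<n})"

lemma GS_run0: "GS (run Q 0) 0"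
  unfolding GS_def run_def by (auto simp: remaining_def cnt_def)

lemma sim_step:
  assumes k: "k < length Ord" and ji: "Ord ! k = (j,i)" and G: "GS (run Q k) k"
    and ch: "pess_choice n p (Q j) (run Q k) j i = cnt i (take k Ord)"
  shows "GS (run Q (Suc k)) (Suc k)"
proof -
  define A where "A = run Q k"
  define c where "c = cnt i (take k Ord)"
  have G1: "\<forall>j l. A j l = (if (j,l) \<in> set (take k Ord) then Some (item j l) else None)"
   and G2: "\<forall>l. remaining n A l = {cnt l (take k Ord)..<n}" using G unfolding GS_def A_def by blast+
  have nin: "(j,i) \<notin> set (take k Ord)" using not_in_take[OF k] ji by simp
  have Anone: "A j i = None" using G1 nin by simp
  have runS: "run Q (Suc k) = A(j := (A j)(i := Some c))"
    using run_Suc[OF k ji, of Q] ch unfolding A_def c_def by simp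
  have setS: "set (take (Suc k) Ord) = insert (j,i) (set (take k Ord))"
    using take_Suc_set[OF k] ji by simp
  have cntS: "cnt l (take (Suc k) Ord) = cnt l (take k Ord) + (if l = i then 1 else 0)" for l
    using k ji by (simp add: take_Suc_conv_app_nth)
  have itc: "item j i = c" unfolding c_def using item_nth[OF k ji] .
  have P1: "\<forall>j' l. run Q (Suc k) j' l = (if (j',l) \<in> set (take (Suc k) Ord) then Some (item j' l) else None)"
  proof (intro allI)
    fix j' l
    show "run Q (Suc k) j' l = (if (j',l) \<in> set (take (Suc k) Ord) then Some (item j' l) else None)"
    proof (cases "j' = j \<and> l = i")
      case True then show ?thesis unfolding runS setS using itc by simp
    next
      case False
      then have "run Q (Suc k) j' l = A j' l" unfolding runS by (cases "j' = j") simp_all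
      then show ?thesis unfolding setS using G1 False by simp
    qed
  qed
  have P2: "\<forall>l. remaining n (run Q (Suc k)) l = {cnt l (take (Suc k) Ord)..<n}"
  proof
    fix l
    show "remaining n (run Q (Suc k)) l = {cnt l (take (Suc k) Ord)..<n}"
    proof (cases "l = i")
      case True
      have "remaining n (run Q (Suc k)) l = {c..<n} - {c}"
        unfolding runS True remaining_step[of A j i, OF Anone] using G2 c_def by simp
      also have "\<dots> = {Suc c..<n}" by auto
      finally show ?thesis using cntS[of l] True c_def by simp
    next
      case False
      then show ?thesis unfolding runS remaining_step_same[OF False] using G2 cntS[of l] by simp
    qed
  qed
  show ?thesis unfolding GS_def using P1 P2 by blast
qed

lemma choice_other:
  assumes k: "k < length Ord" and ji: "Ord ! k = (j,i)" and G: "GS (run Q k) k"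
  shows "pess_choice n p (rk k2 n p) (run Q k) j i = cnt i (take k Ord)"
proof -
  define A where "A = run Q k"
  have G1: "\<forall>j l. A j l = (if (j,l) \<in> set (take k Ord) then Some (item j l) else None)"
   and G2: "\<forall>l. remaining n A l = {cnt l (take k Ord)..<n}" using G unfolding GS_def A_def by blast+
  have jn: "j < n" and ip: "i < p" using nth_in[OF k] ji by simp_all
  have nin: "(j,i) \<notin> set (take k Ord)" using not_in_take[OF k] ji by simp
  have Anone: "A j i = None" using G1 nin by simp
  have sub: "avail_bundles n p A j \<subseteq> bundles n p" using avail_sub[of k Q j] k A_def by simp
  have ne: "avail_bundles n p A j \<noteq> {}" using avail_ne[of k j Q] k jn A_def by simp
  have cl: "cnt i (take k Ord) < n" using cnt_take_less[OF k ji] .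
  have rem: "remaining n A i = {cnt i (take k Ord)..<n}" using G2 by blast
  show ?thesis unfolding A_def[symmetric]
  proof (rule choice_eq[OF sub ne Anone ip])
    show "cnt i (take k Ord) \<in> remaining n A i" using rem cl by simp
    fix y d assume y: "y \<in> remaining n A i" and yc: "y \<noteq> cnt i (take k Ord)"
      and d: "d \<in> avail_bundles n p A j" and di: "d ! i = cnt i (take k Ord)"
    have ylt: "d ! i < y" using y yc di rem by auto
    have d': "d[i := y] \<in> avail_bundles n p A j" "d[i := y] ! i = y" using avail_upd[OF d Anone y ip] by blast+
    have "rk k2 n p d < rk k2 n p (d[i := y])"
      using rk_less[OF k2_inj, of d "d[i:=y]"] sub d d'(1) k2_upd[of d i y] ip ylt by blast
    then show "\<exists>d'\<in>avail_bundles n p A j. d' ! i = y \<and> rk k2 n p d < rk k2 n p d'" using d' by blast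
  qed
qed

end


context octx begin

lemma tau_inj: assumes "j < n" "l1 < p" "l2 < p" "tau j l1 = tau j l2" shows "l1 = l2"
proof -
  have e1: "Ord ! tau j l1 = (j,l1)" by (rule tau_ex(2)[OF assms(1,2)])
  have e2: "Ord ! tau j l2 = (j,l2)" by (rule tau_ex(2)[OF assms(1,3)])
  have "(j,l1) = (j,l2)" using e1 e2 assms(4) by argo
  then show ?thesis by simp
qed

context fixes j0 assumes j0: "j0 < n"
begin

definition bv :: "nat \<Rightarrow> nat \<Rightarrow> nat list" where
  "bv l y = map (\<lambda>l'. if l' = l then y else if tau j0 l' < tau j0 l then item j0 l' else n - 1) [0..<p]"

definition isbad :: "nat \<Rightarrow> nat list \<Rightarrow> bool" where
  "isbad l d \<longleftrightarrow> l < p \<and> d \<in> bundles n p \<and> item j0 l < d ! l \<and>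
     (\<forall>l'<p. l' \<noteq> l \<longrightarrow> d ! l' = (if tau j0 l' < tau j0 l then item j0 l' else n - 1))"

definition fin :: "nat list" where "fin = map (item j0) [0..<p]"

definition k0 :: "nat list \<Rightarrow> nat" where
  "k0 d = (if \<exists>l. isbad l d then n^p + (length Ord - tau j0 (THE l. isbad l d)) * n + d ! (THE l. isbad l d)
           else if d = fin then n^p else gB d)"

lemma isbad_unique: assumes "isbad l1 d" "isbad l2 d" shows "l1 = l2"
proof (rule ccontr)
  assume ne: "l1 \<noteq> l2"
  have l: "l1 < p" "l2 < p" using assms unfolding isbad_def by auto
  have "tau j0 l1 \<noteq> tau j0 l2" using tau_inj[OF j0 l] ne by blast
  then have "tau j0 l1 < tau j0 l2 \<or> tau j0 l2 < tau j0 l1" by linarith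
  then show False
  proof
    assume "tau j0 l1 < tau j0 l2"
    then have "d ! l1 = item j0 l1" using assms(2) l ne unfolding isbad_def by auto
    then show False using assms(1) unfolding isbad_def by simp
  next
    assume "tau j0 l2 < tau j0 l1"
    then have "d ! l2 = item j0 l2" using assms(1) l ne unfolding isbad_def by auto
    then show False using assms(2) unfolding isbad_def by simp
  qed
qed

lemma k0_bad: assumes "isbad l d" shows "k0 d = n^p + (length Ord - tau j0 l) * n + d ! l"
proof -
  have "(THE l. isbad l d) = l" using assms isbad_unique by blast
  then show ?thesis unfolding k0_def using assms by auto
qed

lemma fin_bundle: "fin \<in> bundles n p"
  unfolding fin_def bundles_def using item_lt[OF j0] by simp

lemma fin_notbad: "\<not> isbad l fin"
  unfolding isbad_def fin_def by auto

lemma k0_fin: "k0 fin = n^p"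
  unfolding k0_def using fin_notbad by auto

lemma k0_other: "\<not> (\<exists>l. isbad l d) \<Longrightarrow> d \<noteq> fin \<Longrightarrow> k0 d = gB d"
  unfolding k0_def by auto

lemma bad_eq: assumes "isbad l d" shows "d = bv l (d ! l)"
proof (rule nth_equalityI)
  show "length d = length (bv l (d ! l))" using assms unfolding isbad_def bundles_def bv_def by simp
  fix l' assume "l' < length d"
  then have l': "l' < p" using assms unfolding isbad_def bundles_def by simp
  show "d ! l' = bv l (d ! l) ! l'"
    using assms l' unfolding isbad_def bv_def by (cases "l' = l") simp_all
qed

lemma bv_bad: assumes l: "l < p" and y: "item j0 l < y" "y < n"
  shows "isbad l (bv l y)" "bv l y ! l = y"
proof -
  have "bv l y \<in> bundles n p"
    unfolding bundles_def bv_def using item_lt[OF j0] y n1 by auto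
  then show "isbad l (bv l y)" unfolding isbad_def using l y unfolding bv_def by auto
  show "bv l y ! l = y" unfolding bv_def using l by simp
qed

lemma lenpos: "l < p \<Longrightarrow> tau j0 l < length Ord" using tau_ex(1)[OF j0] by blast

lemma k0_inj: "inj_on k0 (bundles n p)"
proof (rule inj_onI)
  fix d d' assume d: "d \<in> bundles n p" and d': "d' \<in> bundles n p" and eq: "k0 d = k0 d'"
  have lt_n: "e ! l < n" if "e \<in> bundles n p" "l < p" for e l using that unfolding bundles_def by simp
  show "d = d'"
  proof (cases "\<exists>l. isbad l d")
    case True
    then obtain l where l: "isbad l d" by blast
    have lp: "l < p" using l unfolding isbad_def by simp
    have kd: "k0 d = n^p + (length Ord - tau j0 l) * n + d ! l" using k0_bad[OF l] .
    have pos: "length Ord - tau j0 l \<ge> 1" using lenpos[OF lp] by simp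
    then have "n \<le> (length Ord - tau j0 l) * n" by simp
    then have big: "k0 d > n^p" using kd n1 by linarith
    show ?thesis
    proof (cases "\<exists>l. isbad l d'")
      case True
      then obtain l' where l': "isbad l' d'" by blast
      have lp': "l' < p" using l' unfolding isbad_def by simp
      have "(length Ord - tau j0 l) * n + d ! l = (length Ord - tau j0 l') * n + d' ! l'"
        using eq kd k0_bad[OF l'] by simp
      then have "length Ord - tau j0 l = length Ord - tau j0 l'" "d ! l = d' ! l'"
        using lin_inj[of "length Ord - tau j0 l" n "d ! l" "length Ord - tau j0 l'" "d' ! l'"]
          lt_n[OF d lp] lt_n[OF d' lp'] by auto
      moreover have "tau j0 l < length Ord" "tau j0 l' < length Ord" using lenpos lp lp' by auto
      ultimately have "tau j0 l = tau j0 l'" "d ! l = d' ! l'" by auto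
      then have "l = l'" "d ! l = d' ! l'" using tau_inj[OF j0 lp lp'] by auto
      then show ?thesis using bad_eq[OF l] bad_eq[OF l'] by simp
    next
      case False
      then have "k0 d' \<le> n^p"
        using k0_fin k0_other[OF False] gB_lt[OF d'] by (cases "d' = fin") auto
      then show ?thesis using big eq by simp
    qed
  next
    case False
    have kd: "k0 d \<le> n^p" using k0_fin k0_other[OF False] gB_lt[OF d] by (cases "d = fin") auto
    show ?thesis
    proof (cases "\<exists>l. isbad l d'")
      case True
      then obtain l where l: "isbad l d'" by blast
      have lp: "l < p" using l unfolding isbad_def by simp
      have "length Ord - tau j0 l \<ge> 1" using lenpos[OF lp] by simp
      then have "n \<le> (length Ord - tau j0 l) * n" by simp
      then have "k0 d' > n^p" using k0_bad[OF l] n1 by linarith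
      then show ?thesis using kd eq by simp
    next
      case False': False
      show ?thesis
      proof (cases "d = fin")
        case True
        show ?thesis
        proof (rule ccontr)
          assume "d \<noteq> d'"
          then have "d' \<noteq> fin" using True by simp
          then have "k0 d' < n^p" using k0_other[OF False'] gB_lt[OF d'] by simp
          then show False using eq True k0_fin by simp
        qed
      next
        case dF: False
        show ?thesis
        proof (cases "d' = fin")
          case True
          then show ?thesis using eq k0_fin k0_other[OF False dF] gB_lt[OF d] by simp
        next
          case False
          then have "gB d = gB d'" using eq k0_other[OF \<open>\<not> (\<exists>l. isbad l d)\<close> dF] k0_other[OF False' False] by simp
          then show ?thesis using gB_inj d d' inj_on_eq_iff by metis
        qed
      qed
    qed
  qed
qed

lemma card_greater: "card {e \<in> bundles n p. k0 fin < k0 e} \<le> loss j0"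
proof -
  have sub: "{e \<in> bundles n p. k0 fin < k0 e} \<subseteq> (\<Union>l\<in>{..<p}. bv l ` {item j0 l<..<n})"
  proof
    fix e assume e: "e \<in> {e \<in> bundles n p. k0 fin < k0 e}"
    then have eb: "e \<in> bundles n p" and gt: "n^p < k0 e" unfolding k0_fin by simp_all
    have "\<exists>l. isbad l e"
    proof (rule ccontr)
      assume nb: "\<not> (\<exists>l. isbad l e)"
      have "k0 e \<le> n^p" using k0_fin k0_other[OF nb] gB_lt[OF eb] by (cases "e = fin") auto
      then show False using gt by simp
    qed
    then obtain l where l: "isbad l e" by blast
    have lin: "l < p" "item j0 l < e ! l" "e ! l < n" using l unfolding isbad_def bundles_def by auto
    have "e \<in> bv l ` {item j0 l<..<n}"
    proof (rule image_eqI[where f="bv l" and x="e ! l", OF bad_eq[OF l]])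
      show "e ! l \<in> {item j0 l<..<n}" using lin by simp
    qed
    then show "e \<in> (\<Union>l\<in>{..<p}. bv l ` {item j0 l<..<n})" using \<open>l < p\<close> by blast
  qed
  have "card {e \<in> bundles n p. k0 fin < k0 e} \<le> card (\<Union>l\<in>{..<p}. bv l ` {item j0 l<..<n})"
    by (rule card_mono[OF _ sub]) simp
  also have "\<dots> \<le> (\<Sum>l<p. card (bv l ` {item j0 l<..<n}))" by (rule card_UN_le) simp
  also have "\<dots> \<le> (\<Sum>l<p. card {item j0 l<..<n})" by (intro sum_mono card_image_le) simp
  also have "\<dots> = loss j0" unfolding loss_def by (rule sum.cong) simp_all
  finally show ?thesis .
qed

lemma choice_j0:
  assumes k: "k < length Ord" and ji: "Ord ! k = (j0,i)" and G: "GS (run Q k) k"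
  shows "pess_choice n p (rk k0 n p) (run Q k) j0 i = cnt i (take k Ord)"
proof -
  define A where "A = run Q k"
  define c where "c = cnt i (take k Ord)"
  have G1: "\<forall>j l. A j l = (if (j,l) \<in> set (take k Ord) then Some (item j l) else None)"
   and G2: "\<forall>l. remaining n A l = {cnt l (take k Ord)..<n}" using G unfolding GS_def A_def by blast+
  have ip: "i < p" using nth_in[OF k] ji by simp_all
  have nin: "(j0,i) \<notin> set (take k Ord)" using not_in_take[OF k] ji by simp
  have Anone: "A j0 i = None" using G1 nin by simp
  have sub: "avail_bundles n p A j0 \<subseteq> bundles n p" using avail_sub[of k Q j0] k A_def by simp
  have ne: "avail_bundles n p A j0 \<noteq> {}" using avail_ne[of k j0 Q] k j0 A_def by simp
  have cl: "c < n" using cnt_take_less[OF k ji] c_def by simp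
  have rem: "remaining n A i = {c..<n}" using G2 c_def by blast
  have tk: "tau j0 i = k" using tau_nth[OF k ji] .
  have itc: "item j0 i = c" using item_nth[OF k ji] c_def by simp
  have memk: "(j0,l) \<in> set (take k Ord) \<longleftrightarrow> tau j0 l < k" if "l < p" for l
    using mem_take[OF tau_ex(1)[OF j0 that], of k] tau_ex(2)[OF j0 that] by simp
  show ?thesis unfolding A_def[symmetric] c_def[symmetric]
  proof (rule choice_eq[OF sub ne Anone ip])
    show "c \<in> remaining n A i" using rem cl by simp
    fix y d assume y: "y \<in> remaining n A i" and yc: "y \<noteq> c"
      and d: "d \<in> avail_bundles n p A j0" and di: "d ! i = c"
    have ylt: "c < y" "y < n" using y yc rem by auto
    define d' where "d' = bv i y"
    have bad': "isbad i d'" "d' ! i = y" using bv_bad[OF ip] ylt itc unfolding d'_def by auto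
    have d'b: "d' \<in> bundles n p" using bad' unfolding isbad_def by simp
    have d'av: "d' \<in> avail_bundles n p A j0"
      unfolding avail_bundles_def
    proof (intro CollectI conjI allI impI)
      show "length d' = p" using d'b unfolding bundles_def by simp
      fix l assume l: "l < p"
      show "case A j0 l of None \<Rightarrow> d' ! l \<in> remaining n A l | Some x \<Rightarrow> d' ! l = x"
      proof (cases "tau j0 l < k")
        case True
        then have "l \<noteq> i" using tk by auto
        then have "d' ! l = item j0 l" using True tk l unfolding d'_def bv_def by simp
        moreover have "A j0 l = Some (item j0 l)" using G1 memk[OF l] True by simp
        ultimately show ?thesis by simp
      next
        case False
        have An: "A j0 l = None" using G1 memk[OF l] False by simp
        show ?thesis
        proof (cases "l = i")
          case True then show ?thesis using An bad'(2) y by simp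
        next
          case li: False
          have "d' ! l = n - 1" using False li tk l unfolding d'_def bv_def by simp
          moreover have "(j0,l) \<notin> set (take k Ord)" using memk[OF l] False by simp
          then have "cnt l (take k Ord) < n" using cnt_less[OF distinct_take[OF dist] take_fst _ j0] by blast
          ultimately show ?thesis using An G2 by simp
        qed
      qed
    qed
    have kd': "k0 d' = n^p + (length Ord - k) * n + y" using k0_bad[OF bad'(1)] tk bad'(2) by simp
    have db: "d \<in> bundles n p" using sub d by blast
    have "k0 d < k0 d'"
    proof (cases "\<exists>l. isbad l d")
      case True
      then obtain l where l: "isbad l d" by blast
      have lp: "l < p" and gt: "item j0 l < d ! l" and dl: "d ! l < n" using l db unfolding isbad_def bundles_def by auto
      have li: "l \<noteq> i" using gt di itc by auto
      have "\<not> tau j0 l < k"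
      proof
        assume "tau j0 l < k"
        then have "A j0 l = Some (item j0 l)" using G1 memk[OF lp] by simp
        moreover have "case A j0 l of None \<Rightarrow> d ! l \<in> remaining n A l | Some x \<Rightarrow> d ! l = x"
          using d lp unfolding avail_bundles_def by blast
        ultimately show False using gt by simp
      qed
      moreover have "tau j0 l \<noteq> k" using tau_inj[OF j0 lp ip] li tk by auto
      ultimately have tl: "k < tau j0 l" by simp
      have tl2: "tau j0 l < length Ord" using lenpos[OF lp] .
      have "(length Ord - tau j0 l) * n + n \<le> (length Ord - k) * n"
      proof -
        have "Suc (length Ord - tau j0 l) \<le> length Ord - k" using tl tl2 by simp
        then have "Suc (length Ord - tau j0 l) * n \<le> (length Ord - k) * n" by (rule mult_le_mono1)
        then show ?thesis by simp
      qed
      then show ?thesis using k0_bad[OF l] kd' dl by linarith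
    next
      case False
      have "k0 d \<le> n^p" using k0_fin k0_other[OF False] gB_lt[OF db] by (cases "d = fin") auto
      moreover have "length Ord - k \<ge> 1" using k by simp
      then have "n \<le> (length Ord - k) * n" by simp
      ultimately show ?thesis using kd' n1 by linarith
    qed
    then have "rk k0 n p d < rk k0 n p d'" using rk_less[OF k0_inj db d'b] by blast
    then show "\<exists>d'\<in>avail_bundles n p A j0. d' ! i = y \<and> rk k0 n p d < rk k0 n p d'"
      using d'av bad'(2) by blast
  qed
qed

definition Qp :: "nat \<Rightarrow> nat list \<Rightarrow> nat" where
  "Qp j = (if j = j0 then rk k0 n p else rk k2 n p)"

lemma lower: "valid_profile n p Qp \<and> n ^ p - loss j0 \<le> Qp j0 (csam_outcome n p Ord Qp j0)"
proof -
  have vp: "valid_profile n p Qp" unfolding valid_profile_def Qp_def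
    using rk_valid[OF k0_inj] rk_valid[OF k2_inj] by simp
  have GSk: "GS (run Qp k) k" if "k \<le> length Ord" for k
    using that
  proof (induction k)
    case 0 show ?case by (rule GS_run0)
  next
    case (Suc k)
    then have k: "k < length Ord" by simp
    obtain j i where ji: "Ord ! k = (j,i)" by (cases "Ord ! k")
    have G: "GS (run Qp k) k" using Suc by simp
    have "pess_choice n p (Qp j) (run Qp k) j i = cnt i (take k Ord)"
    proof (cases "j = j0")
      case True
      have q: "Qp j = rk k0 n p" unfolding Qp_def using True by simp
      show ?thesis unfolding q using choice_j0[OF k _ G] ji True by simp
    next
      case False
      have q: "Qp j = rk k2 n p" unfolding Qp_def using False by simp
      show ?thesis unfolding q using choice_other[OF k ji G] by simp
    qed
    then show ?case by (rule sim_step[OF k ji G])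
  qed
  have G: "GS (run Qp (length Ord)) (length Ord)" using GSk by simp
  have "csam_outcome n p Ord Qp j0 = fin"
  proof -
    have "run Qp (length Ord) j0 l = Some (item j0 l)" if "l < p" for l
      using G setO j0 that unfolding GS_def by simp
    then show ?thesis unfolding csam_outcome_def csam_run_eq fin_def by simp
  qed
  moreover have "n ^ p - loss j0 \<le> rk k0 n p fin"
  proof -
    have "n ^ p - card {e \<in> bundles n p. k0 fin < k0 e} \<le> rk k0 n p fin" by (rule rk_ge[OF fin_bundle])
    then show ?thesis using card_greater by linarith
  qed
  ultimately show ?thesis using vp unfolding Qp_def by simp
qed

end

lemma lower_ex: "j0 < n \<Longrightarrow> \<exists>Q. valid_profile n p Q \<and> n ^ p - loss j0 \<le> Q j0 (csam_outcome n p Ord Q j0)"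
  using lower by blast

end


lemma worst_set_props:
  assumes vo: "valid_order n p Ord" and n1: "n \<ge> 1"
  shows "finite {P j (csam_outcome n p Ord P j) | P j. valid_profile n p P \<and> j < n}"
    and "{P j (csam_outcome n p Ord P j) | P j. valid_profile n p P \<and> j < n} \<noteq> {}"
proof -
  interpret octx n p Ord using vo n1 by unfold_locales
  have "{P j (csam_outcome n p Ord P j) | P j. valid_profile n p P \<and> j < n} \<subseteq> {..n^p}"
    using upper by fastforce
  then show "finite {P j (csam_outcome n p Ord P j) | P j. valid_profile n p P \<and> j < n}"
    using finite_subset by blast
  obtain Q where Q: "valid_profile n p Q" using lower_ex[of 0] n1 by auto
  have "Q 0 (csam_outcome n p Ord Q 0) \<in> {P j (csam_outcome n p Ord P j) | P j. valid_profile n p P \<and> j < n}"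
  proof -
    have h: "0 < n" using n1 by simp
    show ?thesis using Q h by blast
  qed
  then show "{P j (csam_outcome n p Ord P j) | P j. valid_profile n p P \<and> j < n} \<noteq> {}" by blast
qed

lemma LB:
  assumes vo: "valid_order n p Ord" and n1: "n \<ge> 1" and ev: "even p"
  shows "n ^ p - (n - 1) * (p div 2) \<le> worst_egal_rank n p Ord"
proof -
  interpret octx n p Ord using vo n1 by unfold_locales
  obtain j0 where j0: "j0 < n" "loss j0 \<le> (n - 1) * (p div 2)" using exists_small_loss[OF ev] by blast
  obtain Q where Q: "valid_profile n p Q" "n ^ p - loss j0 \<le> Q j0 (csam_outcome n p Ord Q j0)"
    using lower_ex[OF j0(1)] by blast
  have mem: "Q j0 (csam_outcome n p Ord Q j0) \<in> {P j (csam_outcome n p Ord P j) | P j. valid_profile n p P \<and> j < n}"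
    using Q j0 by blast
  have "Q j0 (csam_outcome n p Ord Q j0) \<le> worst_egal_rank n p Ord"
    unfolding worst_egal_rank_def using Max_ge[OF worst_set_props(1)[OF vo n1] mem] .
  then show ?thesis using Q(2) j0(2) by linarith
qed

lemma UB:
  assumes vK: "valid_agent_order n K" and n1: "n \<ge> 1" and ev: "even p"
  shows "worst_egal_rank n p (balanced_order p K) \<le> n ^ p - (n - 1) * (p div 2)"
proof -
  have vo: "valid_order n p (balanced_order p K)" by (rule bal_valid[OF vK])
  interpret octx n p "balanced_order p K" using vo n1 by unfold_locales
  show ?thesis unfolding worst_egal_rank_def
  proof (subst Max_le_iff[OF worst_set_props[OF vo n1]], intro ballI)
    fix a assume "a \<in> {P j (csam_outcome n p (balanced_order p K) P j) | P j. valid_profile n p P \<and> j < n}"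
    then obtain P j where a: "a = P j (csam_outcome n p (balanced_order p K) P j)" "valid_profile n p P" "j < n"
      by blast
    have "a + loss j \<le> n ^ p" using upper[OF a(2) a(3)] a(1) by simp
    moreover have "loss j = (n - 1) * (p div 2)" using loss_balanced[OF refl vK ev a(3)] .
    ultimately show "a \<le> n ^ p - (n - 1) * (p div 2)" by simp
  qed
qed

theorem proposition4:
  fixes n p :: nat
  assumes "n \<ge> 1" and "even p"
  shows "(\<forall>K. valid_agent_order n K \<longrightarrow>
            worst_egal_rank n p (balanced_order p K) = n ^ p - (n - 1) * (p div 2))
       \<and> (\<forall>K Ord. valid_agent_order n K \<longrightarrow> valid_order n p Ord \<longrightarrow>
            worst_egal_rank n p (balanced_order p K) \<le> worst_egal_rank n p Ord)"
proof -
  have eq: "worst_egal_rank n p (balanced_order p K) = n ^ p - (n - 1) * (p div 2)"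
    if "valid_agent_order n K" for K
    using UB[OF that assms] LB[OF bal_valid[OF that] assms] by simp
  show ?thesis
  proof (intro conjI allI impI)
    fix K assume "valid_agent_order n K"
    then show "worst_egal_rank n p (balanced_order p K) = n ^ p - (n - 1) * (p div 2)" by (rule eq)
  next
    fix K Ord assume K: "valid_agent_order n K" and O: "valid_order n p Ord"
    show "worst_egal_rank n p (balanced_order p K) \<le> worst_egal_rank n p Ord"
      using eq[OF K] LB[OF O assms] by simp
  qed
qed


end
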